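(* Let $\gamma>0$. For any dimension $d>0$ and any $\delta>0$ there exists a ReLU neural network $\mathcal N:\mathbb{R}^d\to\mathbb{R}$ with 4 hidden layers, width $\mathcal O(d^{5/3+\gamma})$ and magnitude of weights at most $1/\delta$, such that: (i) for every entirely non-zero $\mathbf{x}\in\mathcal S^d_\delta$ for which the following success condition holds, $\mathcal N(\mathbf{x})=\operatorname{med}(\mathbf{x})$; (ii) for every $\mathbf{x}\in[0,1]^d$, $\mathcal N(\mathbf{x})\in[-d^2,d^2]$. Success condition: partition the entries of $\mathbf{x}$ into consecutive blocks $\mathbf{x}_1,\dots,\mathbf{x}_q$ of size $\lceil d^{2/3}\rceil$ (the last possibly smaller); for $i\in[q-1]$ let $\mathbf{y}_i$ consist of the elements of $\mathbf{x}_i$ with ranks within $\mathbf{x}_i$ in $\{\lfloor \frac{d^{2/3}}{2}-d^{\frac13+\gamma}\rfloor,\dots,\lceil \frac{d^{2/3}}{2}+d^{\frac13+\gamma}\rceil\}$ and $\mathbf{y}_q=\mathbf{x}_q$; the condition is that some $\mathbf{y}_i$ contains $\operatorname{med}(\mathbf{x})$.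
   Context: $\mathcal S^d_\delta$ is the set of vectors $\mathbf{x}\in\mathbb{R}^d$ whose non-zero entries all lie in $[\delta,1-\delta]$ and are pairwise at distance at least $\delta$. $\operatorname{med}(\mathbf{x})$ denotes the median of the entries of $\mathbf{x}$ (the element of rank $d/2$). A ReLU network applies $[z]_+=\max\{0,z\}$ after each affine hidden map, with an affine output layer; width is the number of neurons in the largest hidden layer. *)

theory Defs
  imports "HOL-Analysis.Analysis"
begin

text \<open>Vectors in R^d are functions nat => real, only indices i < d matter.\<close>

text \<open>A hidden layer: (output width n, weight matrix W (W j i, j<n, i<input dim), bias b).\<close>
type_synonym layer = "nat \<times> (nat \<Rightarrow> nat \<Rightarrow> real) \<times> (nat \<Rightarrow> real)"

text \<open>A ReLU network: list of hidden layers and an affine output layer (w, c) to R.\<close>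
type_synonym relu_net = "layer list \<times> (nat \<Rightarrow> real) \<times> real"

definition relu :: "real \<Rightarrow> real" where
  "relu z = max 0 z"

fun hidden_eval :: "nat \<Rightarrow> layer list \<Rightarrow> (nat \<Rightarrow> real) \<Rightarrow> (nat \<Rightarrow> real)" where
  "hidden_eval m [] x = x"
| "hidden_eval m ((n, W, b) # Ls) x =
     hidden_eval n Ls (\<lambda>j. if j < n then relu ((\<Sum>i<m. W j i * x i) + b j) else 0)"

fun out_dim :: "nat \<Rightarrow> layer list \<Rightarrow> nat" where
  "out_dim m [] = m"
| "out_dim m ((n, W, b) # Ls) = out_dim n Ls"

definition net_eval :: "nat \<Rightarrow> relu_net \<Rightarrow> (nat \<Rightarrow> real) \<Rightarrow> real" where
  "net_eval d N x =
     (case N of (Ls, w, c) \<Rightarrow> (\<Sum>i<out_dim d Ls. w i * hidden_eval d Ls x i) + c)"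

definition hidden_layers :: "relu_net \<Rightarrow> layer list" where
  "hidden_layers N = fst N"

definition net_width :: "relu_net \<Rightarrow> nat" where
  "net_width N = Max (insert 0 (set (map fst (fst N))))"

fun layers_bounded :: "nat \<Rightarrow> layer list \<Rightarrow> real \<Rightarrow> bool" where
  "layers_bounded m [] B = True"
| "layers_bounded m ((n, W, b) # Ls) B =
     ((\<forall>j<n. \<forall>i<m. \<bar>W j i\<bar> \<le> B) \<and> (\<forall>j<n. \<bar>b j\<bar> \<le> B) \<and> layers_bounded n Ls B)"

definition weights_bounded :: "nat \<Rightarrow> relu_net \<Rightarrow> real \<Rightarrow> bool" where
  "weights_bounded d N B =
     (case N of (Ls, w, c) \<Rightarrow>
        layers_bounded d Ls B \<and> (\<forall>i<out_dim d Ls. \<bar>w i\<bar> \<le> B) \<and> \<bar>c\<bar> \<le> B)"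

definition in_S :: "nat \<Rightarrow> real \<Rightarrow> (nat \<Rightarrow> real) \<Rightarrow> bool" where
  "in_S d \<delta> x =
     ((\<forall>i<d. x i \<noteq> 0 \<longrightarrow> \<delta> \<le> x i \<and> x i \<le> 1 - \<delta>) \<and>
      (\<forall>i<d. \<forall>j<d. i \<noteq> j \<and> x i \<noteq> 0 \<and> x j \<noteq> 0 \<longrightarrow> \<bar>x i - x j\<bar> \<ge> \<delta>))"

definition rank_in :: "nat set \<Rightarrow> (nat \<Rightarrow> real) \<Rightarrow> real \<Rightarrow> nat" where
  "rank_in I x v = card {j \<in> I. x j \<le> v}"

definition median :: "nat \<Rightarrow> (nat \<Rightarrow> real) \<Rightarrow> real" where
  "median d x = (THE v. (\<exists>i<d. x i = v) \<and> rank_in {..<d} x v = nat \<lceil>real d / 2\<rceil>)"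

definition block_size :: "nat \<Rightarrow> nat" where
  "block_size d = nat \<lceil>real d powr (2/3)\<rceil>"

definition num_blocks :: "nat \<Rightarrow> nat" where
  "num_blocks d = nat \<lceil>real d / real (block_size d)\<rceil>"

definition block :: "nat \<Rightarrow> nat \<Rightarrow> nat set" where
  "block d k = {k * block_size d ..< min d ((k + 1) * block_size d)}"

definition y_block :: "real \<Rightarrow> nat \<Rightarrow> (nat \<Rightarrow> real) \<Rightarrow> nat \<Rightarrow> real set" where
  "y_block \<gamma> d x k =
     (if k + 1 = num_blocks d then x ` block d k
      else x ` {i \<in> block d k.
             \<lfloor>real d powr (2/3) / 2 - real d powr (1/3 + \<gamma>)\<rfloor> \<le> int (rank_in (block d k) x (x i)) \<and>
             int (rank_in (block d k) x (x i)) \<le> \<lceil>real d powr (2/3) / 2 + real d powr (1/3 + \<gamma>)\<rceil>})"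

definition success_cond :: "real \<Rightarrow> nat \<Rightarrow> (nat \<Rightarrow> real) \<Rightarrow> bool" where
  "success_cond \<gamma> d x = (\<exists>k < num_blocks d. median d x \<in> y_block \<gamma> d x k)"

end

theory Submission
  imports Defs "HOL-Analysis.Analysis"
begin

lemma if0_mult: "(if P then c else 0) * (z::real) = (if P then c * z else 0)" by simp

lemma sum_lessThan_add_split:
  "(\<Sum>i<A+B. f i) = (\<Sum>i<A. f i) + (\<Sum>i<B. f (A+i))" for f :: "nat \<Rightarrow> real"
  by (induction B) (simp_all add: add.assoc)

lemma sum_group:
  fixes G K g :: nat
  assumes "g < G"
  shows "(\<Sum>i<G*K. (if i div K = g then c (i mod K) else 0) * (z i::real)) = (\<Sum>u<K. c u * z (g*K+u))"
proof -
  have "(\<Sum>i<G*K. (if i div K = g then c (i mod K) else 0) * z i)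
      = (\<Sum>i\<in>{i\<in>{..<G*K}. i div K = g}. c (i mod K) * z i)"
    unfolding if0_mult by (rule sum.inter_filter[symmetric]) simp
  also have "{i\<in>{..<G*K}. i div K = g} = (\<lambda>u. g*K+u) ` {..<K}"
  proof (cases "K = 0")
    case True thus ?thesis by simp
  next
    case False
    show ?thesis
    proof (intro set_eqI iffI)
      fix i assume "i \<in> {i\<in>{..<G*K}. i div K = g}"
      hence "i div K = g" by simp
      hence "i = g*K + i mod K" by (metis div_mult_mod_eq)
      moreover have "i mod K < K" using False by simp
      ultimately show "i \<in> (\<lambda>u. g*K+u) ` {..<K}" by (metis imageI lessThan_iff)
    next
      fix i assume "i \<in> (\<lambda>u. g*K+u) ` {..<K}"
      then obtain u where u: "u < K" "i = g*K+u" by auto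
      have "g*K + u < Suc g * K" using u(1) by simp
      also have "\<dots> \<le> G*K" using assms by (intro mult_le_mono1) simp
      finally have "g*K + u < G*K" .
      moreover have "(g*K+u) div K = g" using u(1) by simp
      ultimately show "i \<in> {i\<in>{..<G*K}. i div K = g}" using u by simp
    qed
  qed
  also have "(\<Sum>i\<in>(\<lambda>u. g*K+u) ` {..<K}. c (i mod K) * z i) = (\<Sum>u<K. c u * z (g*K+u))"
    by (subst sum.reindex) (auto simp: inj_on_def)
  finally show ?thesis .
qed

lemma sum_regroup:
  "(\<Sum>u<K*n. f u) = (\<Sum>a<n. (\<Sum>t<K. f (a*K+t)))" for f :: "nat \<Rightarrow> real"
proof (induction n)
  case 0 then show ?case by simp
next
  case (Suc n)
  have "(\<Sum>u<K*Suc n. f u) = (\<Sum>u<K*n + K. f u)" by (simp add: algebra_simps)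
  also have "\<dots> = (\<Sum>u<K*n. f u) + (\<Sum>t<K. f (K*n+t))" by (rule sum_lessThan_add_split)
  finally show ?case using Suc by (simp add: mult.commute)
qed

lemma sum_delta_mult:
  "(\<Sum>i<m. (if i = a then c else 0) * (z i::real)) = (if a < m then c * z a else 0)" for m a :: nat
  unfolding if0_mult sum.delta[OF finite_lessThan] by simp


definition lay :: "nat \<Rightarrow> nat \<Rightarrow> (nat \<Rightarrow> nat \<Rightarrow> real) \<Rightarrow> (nat \<Rightarrow> real) \<Rightarrow> (nat \<Rightarrow> real) \<Rightarrow> nat \<Rightarrow> real" where
  "lay n m W b y = (\<lambda>j. if j < n then relu ((\<Sum>i<m. W j i * y i) + b j) else 0)"

definition hfun :: "real \<Rightarrow> real \<Rightarrow> real" where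
  "hfun c t = relu (c - t) + relu (c + t) - relu t - relu (- t) - relu c"

definition sx :: "nat \<Rightarrow> real" where "sx t = (if t = 2 \<or> t = 3 then 0 else 1)"
definition sT :: "nat \<Rightarrow> real" where "sT t = (if t = 0 \<or> t = 3 then -1 else if t = 4 then 0 else 1)"
definition sh :: "nat \<Rightarrow> real" where "sh t = (if t \<le> 1 then 1 else -1)"

lemma sum5: "(\<Sum>t<(5::nat). f t) = f 0 + f 1 + f 2 + f 3 + (f 4 :: real)"
  by (simp add: eval_nat_numeral)

lemma hfun_units: "(\<Sum>t<5. sh t * relu (sx t * c + sT t * T)) = hfun c T"
  by (simp add: sum5 sh_def sx_def sT_def hfun_def)

locale C3 =
  fixes \<gamma> :: real and d :: nat and \<delta> :: real
  assumes gpos: "\<gamma> > 0" and dpos: "d > 0" and dlpos: "\<delta> > 0"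
begin

definition "bs = block_size d"
definition "nb = num_blocks d"
definition "Lw = max 1 \<lfloor>real d powr (2/3) / 2 - real d powr (1/3 + \<gamma>)\<rfloor>"
definition "Hw = min (int bs) \<lceil>real d powr (2/3) / 2 + real d powr (1/3 + \<gamma>)\<rceil>"
definition "ww = nat (Hw - Lw + 1)"
definition "nc = (nb - 1) * ww + bs"
definition "ck p = (if p < (nb-1)*ww then p div ww else nb - 1)"
definition "cr p = (if p < (nb-1)*ww then nat Lw + p mod ww else p - (nb-1)*ww + 1)"

definition "M1 = d * bs"
definition "n1 = 2*M1 + d"
definition "W1 j i = (let jj = (if j < M1 then j else j - M1); a = jj div bs; a' = (a div bs)*bs + jj mod bs in
   if j < 2*M1 then (if a' < d then (if i = a then 1/\<delta> else 0) - (if i = a' then 1/\<delta> else 0) else 0)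
   else (if i = j - 2*M1 then 1 else 0))"
definition "b1 j = (if M1 \<le> j \<and> j < 2*M1 then -1 else (0::real))"

definition "M2 = 5*nc*bs"
definition "n2 = M2 + d"
definition "el j = ck ((j div 5) div bs) * bs + (j div 5) mod bs"
definition "W2 j i = (if j < M2 then (if el j < d then
     (if i < M1 then (if i div bs = el j then sT (j mod 5) else 0)
      else if i < 2*M1 then (if (i - M1) div bs = el j then - sT (j mod 5) else 0)
      else if i = 2*M1 + el j then sx (j mod 5) else 0) else 0)
   else (if i = 2*M1 + (j - M2) then 1 else 0))"
definition "b2 j = (if j < M2 \<and> el j < d then sT (j mod 5) * (1 - real (cr ((j div 5) div bs))) else 0)"

definition "M3 = 2*nc*d"
definition "n3 = M3 + 2*nc"
definition "W3 j i = (if j < M3 then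
     (if i < M2 then (if i div (5*bs) = (j div 2) div d then - sh (i mod 5) / \<delta> else 0)
      else if i = M2 + (j div 2) mod d then 1/\<delta> else 0)
   else (if i < M2 then (if i div (5*bs) = (j - M3) div 2 then sh (i mod 5) else 0) else 0))"
definition "b3 j = (if (if j < M3 then j mod 2 else (j - M3) mod 2) = 1 then -1 else (0::real))"

definition "mm = nat \<lceil>real d / 2\<rceil>"
definition "n4 = 5*nc"
definition "W4 j i = (if i < M3 then (if i div (2*d) = j div 5 then - sT (j mod 5) * (if i mod 2 = 0 then 1 else -1) else 0)
   else if i = M3 + 2*(j div 5) then sx (j mod 5) else if i = M3 + 2*(j div 5) + 1 then - sx (j mod 5) else 0)"
definition "b4 j = sT (j mod 5) * (real d - real mm)"
definition "wo i = sh (i mod 5)"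
definition "NN = ([(n1,W1,b1),(n2,W2,b2),(n3,W3,b3),(n4,W4,b4)], wo, 0::real)"

definition "z1 x = lay n1 d W1 b1 x"
definition "z2 x = lay n2 n1 W2 b2 (z1 x)"
definition "z3 x = lay n3 n2 W3 b3 (z2 x)"
definition "z4 x = lay n4 n3 W4 b4 (z3 x)"

lemma net_eval_NN: "net_eval d NN x = (\<Sum>i<n4. wo i * z4 x i)"
  by (simp add: net_eval_def NN_def z1_def z2_def z3_def z4_def lay_def)

lemma bs_pos: "bs > 0"
proof -
  have "real d powr (2/3) > 0" using dpos by simp
  thus ?thesis unfolding bs_def block_size_def by linarith
qed

lemma divmod_aux: "u < bs \<Longrightarrow> (a*bs+u) div bs = a \<and> (a*bs+u) mod bs = u"
  by simp

lemma lt_M1: "a < d \<Longrightarrow> u < bs \<Longrightarrow> a*bs+u < M1"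
proof -
  assume "a < d" "u < bs"
  hence "a*bs + u < a*bs + bs" by simp
  also have "\<dots> = Suc a * bs" by simp
  also have "\<dots> \<le> d * bs" using \<open>a<d\<close> by (intro mult_le_mono1) simp
  finally show ?thesis unfolding M1_def .
qed

definition "prt a u = (a div bs)*bs + u"

lemma z1_a: assumes "a < d" "u < bs"
  shows "z1 x (a*bs+u) = (if prt a u < d then relu ((x a - x (prt a u))/\<delta>) else 0)"
proof -
  have j: "a*bs+u < M1" using lt_M1 assms .
  hence "a*bs+u < n1" unfolding n1_def by simp
  moreover have "W1 (a*bs+u) i = (if prt a u < d then (if i = a then 1/\<delta> else 0) - (if i = prt a u then 1/\<delta> else 0) else 0)" for i
    using j assms by (simp add: W1_def Let_def prt_def)
  moreover have "b1 (a*bs+u) = 0" using j by (simp add: b1_def)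
  ultimately show ?thesis using assms
    by (simp add: z1_def lay_def left_diff_distrib sum_subtractf sum_delta_mult diff_divide_distrib relu_def)
qed

lemma z1_b: assumes "a < d" "u < bs"
  shows "z1 x (M1+a*bs+u) = (if prt a u < d then relu ((x a - x (prt a u))/\<delta> - 1) else 0)"
proof -
  have j: "a*bs+u < M1" using lt_M1 assms .
  hence "M1+a*bs+u < n1" unfolding n1_def by simp
  moreover have "W1 (M1+a*bs+u) i = (if prt a u < d then (if i = a then 1/\<delta> else 0) - (if i = prt a u then 1/\<delta> else 0) else 0)" for i
    using j assms by (simp add: W1_def Let_def prt_def)
  moreover have "b1 (M1+a*bs+u) = -1" using j by (simp add: b1_def)
  ultimately show ?thesis using assms
    by (simp add: z1_def lay_def left_diff_distrib sum_subtractf sum_delta_mult diff_divide_distrib relu_def)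
qed

lemma z1_c: assumes "a < d"
  shows "z1 x (2*M1+a) = relu (x a)"
proof -
  have "2*M1+a < n1" using assms unfolding n1_def by simp
  moreover have "W1 (2*M1+a) i = (if i = a then 1 else 0)" for i
    by (simp add: W1_def Let_def)
  moreover have "b1 (2*M1+a) = 0" by (simp add: b1_def)
  ultimately show ?thesis using assms
    by (simp add: z1_def lay_def sum_delta_mult)
qed

end

lemma dmK: "t < (K::nat) \<Longrightarrow> (c*K+t) div K = c \<and> (c*K+t) mod K = t" by simp

context C3 begin

definition "cmpv x a u = z1 x (a*bs+u) - z1 x (M1+a*bs+u)"
definition "rankv x e = 1 + (\<Sum>u<bs. cmpv x e u)"

lemma W2_sum:
  assumes j: "j < M2" and e: "el j < d"
  shows "(\<Sum>i<n1. W2 j i * y i) = sT (j mod 5) * (\<Sum>u<bs. y (el j*bs+u))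
          - sT (j mod 5) * (\<Sum>u<bs. y (M1 + (el j*bs+u))) + sx (j mod 5) * y (2*M1 + el j)"
proof -
  have "(\<Sum>i<n1. W2 j i * y i) = (\<Sum>i<M1. W2 j i * y i) + (\<Sum>i<M1. W2 j (M1+i) * y (M1+i))
        + (\<Sum>i<d. W2 j (M1+M1+i) * y (M1+M1+i))"
    unfolding n1_def mult_2 by (simp add: sum_lessThan_add_split)
  also have "(\<Sum>i<M1. W2 j i * y i) = (\<Sum>i<d*bs. (if i div bs = el j then sT (j mod 5) else 0) * y i)"
    unfolding M1_def by (rule sum.cong) (use j e in \<open>auto simp: W2_def M1_def\<close>)
  also have "\<dots> = (\<Sum>u<bs. sT (j mod 5) * y (el j*bs+u))" by (rule sum_group[OF e])
  also have "(\<Sum>i<M1. W2 j (M1+i) * y (M1+i)) = (\<Sum>i<d*bs. (if i div bs = el j then - sT (j mod 5) else 0) * y (M1+i))"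
    unfolding M1_def by (rule sum.cong) (use j e in \<open>auto simp: W2_def M1_def\<close>)
  also have "\<dots> = (\<Sum>u<bs. - sT (j mod 5) * y (M1+(el j*bs+u)))" by (rule sum_group[OF e])
  also have "(\<Sum>i<d. W2 j (M1+M1+i) * y (M1+M1+i)) = (\<Sum>i<d. (if i = el j then sx (j mod 5) else 0) * y (M1+M1+i))"
    by (rule sum.cong) (use j e in \<open>auto simp: W2_def\<close>)
  also have "\<dots> = sx (j mod 5) * y (2*M1 + el j)" using e by (simp add: sum_delta_mult mult_2)
  finally show ?thesis by (simp add: sum_distrib_left sum_negf)
qed

lemma z2_unit:
  assumes p: "p < nc" and u: "u < bs" and t: "t < 5"
  shows "z2 x ((p*bs+u)*5+t) = (if ck p*bs+u < d then relu (sx t * relu (x (ck p*bs+u)) + sT t * (rankv x (ck p*bs+u) - real (cr p))) else 0)"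
proof -
  let ?j = "(p*bs+u)*5+t"
  have jd: "?j div 5 = p*bs+u" "?j mod 5 = t" using dmK[OF t, of "p*bs+u"] by auto
  have pd: "(p*bs+u) div bs = p" "(p*bs+u) mod bs = u" using u by auto
  have elj: "el ?j = ck p*bs+u" unfolding el_def jd pd ..
  have "p*bs+u < nc*bs"
  proof -
    have "p*bs+u < Suc p * bs" using u by simp
    also have "\<dots> \<le> nc*bs" using p by (intro mult_le_mono1) simp
    finally show ?thesis .
  qed
  hence jM: "?j < M2" unfolding M2_def using t by simp
  hence jn: "?j < n2" unfolding n2_def by simp
  show ?thesis
  proof (cases "ck p*bs+u < d")
    case True
    have "(\<Sum>i<n1. W2 ?j i * z1 x i) + b2 ?j = sx t * relu (x (ck p*bs+u)) + sT t * (rankv x (ck p*bs+u) - real (cr p))"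
      (is "?L = ?R")
    proof -
      have "(\<Sum>i<n1. W2 ?j i * z1 x i) = sT t * (\<Sum>k<bs. z1 x ((ck p*bs+u)*bs+k))
          - sT t * (\<Sum>k<bs. z1 x (M1 + ((ck p*bs+u)*bs+k))) + sx t * z1 x (2*M1 + (ck p*bs+u))"
        using W2_sum[OF jM, of "z1 x"] True elj jd by simp
      hence L1: "?L = sT t * (\<Sum>k<bs. z1 x ((ck p*bs+u)*bs+k))
          - sT t * (\<Sum>k<bs. z1 x (M1 + ((ck p*bs+u)*bs+k))) + sx t * relu (x (ck p*bs+u)) + b2 ?j"
        using z1_c[OF True] by simp
      have "b2 ?j = sT t * (1 - real (cr p))" using jM elj True jd pd by (simp add: b2_def)
      with L1 show ?thesis
        by (simp add: rankv_def cmpv_def sum_subtractf algebra_simps)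
    qed
    thus ?thesis using jn True by (simp add: z2_def lay_def)
  next
    case False
    have "W2 ?j i = 0" for i using False elj jM by (simp add: W2_def)
    moreover have "b2 ?j = 0" using False elj by (simp add: b2_def)
    ultimately show ?thesis using False jn by (simp add: z2_def lay_def relu_def)
  qed
qed

lemma z2_pass:
  assumes "a < d" shows "z2 x (M2 + a) = relu (relu (x a))"
proof -
  have "M2 + a < n2" using assms unfolding n2_def by simp
  moreover have "W2 (M2+a) i = (if i = 2*M1+a then 1 else 0)" for i by (simp add: W2_def)
  moreover have "b2 (M2+a) = 0" by (simp add: b2_def)
  moreover have "2*M1+a < n1" using assms by (simp add: n1_def)
  ultimately show ?thesis using assms by (simp add: z2_def lay_def sum_delta_mult z1_c)
qed

definition "cv x p = (\<Sum>u<bs. if ck p*bs+u < d then hfun (relu (x (ck p*bs+u))) (rankv x (ck p*bs+u) - real (cr p)) else 0)"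

definition "gsum y p = (\<Sum>i<M2. (if i div (5*bs) = p then sh (i mod 5) else 0) * y i)"

lemma gsum_z2: assumes p: "p < nc" shows "gsum (z2 x) p = cv x p"
proof -
  have "gsum (z2 x) p = (\<Sum>i<nc*(5*bs). (if i div (5*bs) = p then sh (i mod 5) else 0) * z2 x i)"
    unfolding gsum_def M2_def by (simp add: algebra_simps)
  also have "\<dots> = (\<Sum>i<nc*(5*bs). (if i div (5*bs) = p then sh ((i mod (5*bs)) mod 5) else 0) * z2 x i)"
  proof -
    have mm5: "i mod (5*bs) mod 5 = i mod 5" for i :: nat by (rule mod_mod_cancel) simp
    show ?thesis unfolding mm5 ..
  qed
  also have "\<dots> = (\<Sum>u<5*bs. sh (u mod 5) * z2 x (p*(5*bs)+u))" by (rule sum_group[OF p, where c="\<lambda>u. sh (u mod 5)"])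
  also have "\<dots> = (\<Sum>a<bs. (\<Sum>t<5. sh ((a*5+t) mod 5) * z2 x (p*(5*bs)+(a*5+t))))" by (rule sum_regroup)
  also have "\<dots> = (\<Sum>a<bs. (\<Sum>t<5. sh t * z2 x ((p*bs+a)*5+t)))"
    by (intro sum.cong refl) (simp add: algebra_simps)
  also have "\<dots> = cv x p" unfolding cv_def
  proof (intro sum.cong refl)
    fix a assume a: "a \<in> {..<bs}"
    have "(\<Sum>t<5. sh t * z2 x ((p*bs+a)*5+t)) = (\<Sum>t<5. sh t * (if ck p*bs+a < d then relu (sx t * relu (x (ck p*bs+a)) + sT t * (rankv x (ck p*bs+a) - real (cr p))) else 0))"
    proof (intro sum.cong refl)
      fix t assume "t \<in> {..<(5::nat)}"
      hence t: "t < 5" by simp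
      from a have a': "a < bs" by simp
      show "sh t * z2 x ((p*bs+a)*5+t) = sh t * (if ck p*bs+a < d then relu (sx t * relu (x (ck p*bs+a)) + sT t * (rankv x (ck p*bs+a) - real (cr p))) else 0)"
        by (subst z2_unit[OF p a' t]) (rule refl)
    qed
    also have "\<dots> = (if ck p*bs+a < d then hfun (relu (x (ck p*bs+a))) (rankv x (ck p*bs+a) - real (cr p)) else 0)"
      by (cases "ck p*bs+a < d") (simp_all add: hfun_units)
    finally show "(\<Sum>t<5. sh t * z2 x ((p*bs+a)*5+t)) = (if ck p*bs+a < d then hfun (relu (x (ck p*bs+a))) (rankv x (ck p*bs+a) - real (cr p)) else 0)" .
  qed
  finally show ?thesis .
qed

end

context C3 begin

lemma M3_eq: "M3 = nc*(2*d)" unfolding M3_def by simp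
lemma M2_eq: "M2 = nc*(5*bs)" unfolding M2_def by simp

lemma idx3: assumes p: "p < nc" and a: "a < d" and t: "t < 2"
  shows "(p*d+a)*2+t < M3" "((p*d+a)*2+t) div 2 = p*d+a" "((p*d+a)*2+t) mod 2 = t"
    "(p*d+a) div d = p" "(p*d+a) mod d = a"
proof -
  have "p*d+a < Suc p * d" using a by simp
  also have "\<dots> \<le> nc*d" using p by (intro mult_le_mono1) simp
  finally have "p*d+a < nc*d" .
  thus "(p*d+a)*2+t < M3" unfolding M3_def using t by simp
  show "((p*d+a)*2+t) div 2 = p*d+a" by (rule conjunct1[OF dmK[OF t]])
  show "((p*d+a)*2+t) mod 2 = t" by (rule conjunct2[OF dmK[OF t]])
  show "(p*d+a) div d = p" by (rule conjunct1[OF dmK[OF a]])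
  show "(p*d+a) mod d = a" by (rule conjunct2[OF dmK[OF a]])
qed

lemma z3_cmp: assumes p: "p < nc" and a: "a < d" and t: "t < 2"
  shows "z3 x ((p*d+a)*2+t) = relu ((relu (relu (x a)) - cv x p)/\<delta> - real t)"
proof -
  let ?j = "(p*d+a)*2+t"
  note ix = idx3[OF p a t]
  have jn: "?j < n3" using ix(1) unfolding n3_def by simp
  have "(\<Sum>i<n2. W3 ?j i * z2 x i) = (\<Sum>i<M2. W3 ?j i * z2 x i) + (\<Sum>i<d. W3 ?j (M2+i) * z2 x (M2+i))"
    unfolding n2_def by (rule sum_lessThan_add_split)
  also have "(\<Sum>i<M2. W3 ?j i * z2 x i) = (\<Sum>i<M2. (- 1/\<delta>) * ((if i div (5*bs) = p then sh (i mod 5) else 0) * z2 x i))"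
    by (rule sum.cong) (use ix in \<open>auto simp: W3_def\<close>)
  also have "\<dots> = (- 1/\<delta>) * gsum (z2 x) p" unfolding gsum_def sum_distrib_left by (rule refl)
  also have "\<dots> = (- 1/\<delta>) * cv x p" by (simp add: gsum_z2[OF p])
  also have "(\<Sum>i<d. W3 ?j (M2+i) * z2 x (M2+i)) = (\<Sum>i<d. (if i = a then 1/\<delta> else 0) * z2 x (M2+i))"
    by (rule sum.cong) (use ix in \<open>auto simp: W3_def\<close>)
  also have "\<dots> = 1/\<delta> * relu (relu (x a))" using a by (simp add: sum_delta_mult z2_pass)
  finally have S: "(\<Sum>i<n2. W3 ?j i * z2 x i) = - cv x p / \<delta> + relu (relu (x a)) / \<delta>" by simp
  have "b3 ?j = - real t" using ix t by (auto simp: b3_def)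
  thus ?thesis using S jn by (simp add: z3_def lay_def diff_divide_distrib)
qed

lemma z3_pass: assumes p: "p < nc" and t: "t < 2"
  shows "z3 x (M3+(2*p+t)) = relu (cv x p - real t)"
proof -
  let ?j = "M3+(2*p+t)"
  have jn: "?j < n3" using p t unfolding n3_def by simp
  have "(\<Sum>i<n2. W3 ?j i * z2 x i) = (\<Sum>i<M2. W3 ?j i * z2 x i) + (\<Sum>i<d. W3 ?j (M2+i) * z2 x (M2+i))"
    unfolding n2_def by (rule sum_lessThan_add_split)
  also have "(\<Sum>i<M2. W3 ?j i * z2 x i) = gsum (z2 x) p"
    unfolding gsum_def by (rule sum.cong) (use t in \<open>auto simp: W3_def\<close>)
  also have "(\<Sum>i<d. W3 ?j (M2+i) * z2 x (M2+i)) = 0" by (simp add: W3_def)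
  finally have S: "(\<Sum>i<n2. W3 ?j i * z2 x i) = cv x p" using gsum_z2[OF p] by simp
  have "b3 ?j = - real t" using t by (auto simp: b3_def M3_def)
  thus ?thesis using S jn by (simp add: z3_def lay_def)
qed

definition "clampc c = relu c - relu (c - 1)"
definition "Rv x p = real d - (\<Sum>a<d. relu ((relu (relu (x a)) - cv x p)/\<delta>) - relu ((relu (relu (x a)) - cv x p)/\<delta> - 1))"

lemma z4_unit: assumes p: "p < nc" and t: "t < 5"
  shows "z4 x (p*5+t) = relu (sx t * clampc (cv x p) + sT t * (Rv x p - real mm))"
proof -
  let ?j = "p*5+t"
  have jd: "?j div 5 = p" "?j mod 5 = t" using dmK[OF t] by auto
  have jn: "?j < n4"
  proof -
    have "p*5+t < Suc p * 5" using t by simp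
    also have "\<dots> \<le> nc*5" using p by (intro mult_le_mono1) simp
    finally show ?thesis unfolding n4_def by simp
  qed
  have "(\<Sum>i<n3. W4 ?j i * z3 x i) = (\<Sum>i<M3. W4 ?j i * z3 x i) + (\<Sum>i<2*nc. W4 ?j (M3+i) * z3 x (M3+i))"
    unfolding n3_def by (rule sum_lessThan_add_split)
  also have "(\<Sum>i<M3. W4 ?j i * z3 x i) = (\<Sum>i<nc*(2*d). (if i div (2*d) = p then - sT t * (if (i mod (2*d)) mod 2 = 0 then 1 else -1) else 0) * z3 x i)"
  proof -
    have mm2: "i mod (2*d) mod 2 = i mod 2" for i :: nat by (rule mod_mod_cancel) simp
    show ?thesis unfolding mm2 M3_eq by (rule sum.cong) (use jd in \<open>auto simp: W4_def M3_eq\<close>)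
  qed
  also have "\<dots> = (\<Sum>u<2*d. - sT t * (if u mod 2 = 0 then 1 else -1) * z3 x (p*(2*d)+u))"
    by (rule sum_group[OF p, where c="\<lambda>u. - sT t * (if u mod 2 = 0 then 1 else -1)"])
  also have "\<dots> = (\<Sum>a<d. (\<Sum>t'<2. - sT t * (if (a*2+t') mod 2 = 0 then 1 else -1) * z3 x (p*(2*d)+(a*2+t'))))"
    by (rule sum_regroup)
  also have "\<dots> = (\<Sum>a<d. - sT t * (z3 x ((p*d+a)*2+0) - z3 x ((p*d+a)*2+1)))"
  proof (intro sum.cong refl)
    fix a
    have sum2: "(\<Sum>t<(2::nat). f t) = f 0 + f 1" for f :: "nat \<Rightarrow> real" by (simp add: numeral_2_eq_2)
    have m0: "(a*2+0) mod 2 = (0::nat)" and m1: "(a*2+1) mod 2 = (1::nat)"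
      using dmK[of 0 2 a] dmK[of 1 2 a] by simp_all
    have i0: "p*(2*d)+(a*2+0) = (p*d+a)*2+0" and i1: "p*(2*d)+(a*2+1) = (p*d+a)*2+1" by (simp_all add: algebra_simps)
    show "(\<Sum>t'<2. - sT t * (if (a*2+t') mod 2 = 0 then 1 else -1) * z3 x (p*(2*d)+(a*2+t'))) = - sT t * (z3 x ((p*d+a)*2+0) - z3 x ((p*d+a)*2+1))"
      unfolding sum2 m0 m1 i0 i1 by (simp add: algebra_simps)
  qed
  also have "\<dots> = (\<Sum>a<d. - sT t * (relu ((relu (relu (x a)) - cv x p)/\<delta>) - relu ((relu (relu (x a)) - cv x p)/\<delta> - 1)))"
  proof (intro sum.cong refl)
    fix a assume "a \<in> {..<d}" hence a: "a < d" by simp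
    show "- sT t * (z3 x ((p*d+a)*2+0) - z3 x ((p*d+a)*2+1)) = - sT t * (relu ((relu (relu (x a)) - cv x p)/\<delta>) - relu ((relu (relu (x a)) - cv x p)/\<delta> - 1))"
      by (subst z3_cmp[OF p a], simp, subst z3_cmp[OF p a], simp) simp
  qed
  also have "(\<Sum>i<2*nc. W4 ?j (M3+i) * z3 x (M3+i)) = (\<Sum>i<2*nc. ((if i = 2*p then sx t else 0) + (if i = 2*p+1 then - sx t else 0)) * z3 x (M3+i))"
    by (rule sum.cong) (use jd in \<open>auto simp: W4_def\<close>)
  also have "\<dots> = sx t * z3 x (M3+(2*p+0)) - sx t * z3 x (M3+(2*p+1))"
    using p by (simp add: distrib_right sum.distrib sum_delta_mult)
  also have "\<dots> = sx t * clampc (cv x p)"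
  proof -
    have a0: "z3 x (M3+(2*p+0)) = relu (cv x p - real 0)" by (rule z3_pass[OF p]) simp
    have a1: "z3 x (M3+(2*p+1)) = relu (cv x p - real 1)" by (rule z3_pass[OF p]) simp
    show ?thesis unfolding a0 a1 by (simp add: clampc_def algebra_simps)
  qed
  finally have S: "(\<Sum>i<n3. W4 ?j i * z3 x i) = - sT t * (real d - Rv x p) + sx t * clampc (cv x p)"
    by (simp add: Rv_def sum_distrib_left)
  have "b4 ?j = sT t * (real d - real mm)" using jd by (simp add: b4_def)
  hence "(\<Sum>i<n3. W4 ?j i * z3 x i) + b4 ?j = sx t * clampc (cv x p) + sT t * (Rv x p - real mm)"
    using S by (simp add: algebra_simps)
  thus ?thesis using jn by (simp add: z4_def lay_def)
qed

theorem net_struct: "net_eval d NN x = (\<Sum>p<nc. hfun (clampc (cv x p)) (Rv x p - real mm))"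
proof -
  have "net_eval d NN x = (\<Sum>i<5*nc. sh (i mod 5) * z4 x i)"
    by (simp add: net_eval_NN wo_def n4_def)
  also have "\<dots> = (\<Sum>p<nc. (\<Sum>t<5. sh ((p*5+t) mod 5) * z4 x (p*5+t)))"
    by (rule sum_regroup)
  also have "\<dots> = (\<Sum>p<nc. (\<Sum>t<5. sh t * relu (sx t * clampc (cv x p) + sT t * (Rv x p - real mm))))"
  proof (intro sum.cong refl)
    fix p t assume "p \<in> {..<nc}" "t \<in> {..<(5::nat)}"
    hence p: "p < nc" and t: "t < 5" by auto
    show "sh ((p*5+t) mod 5) * z4 x (p*5+t) = sh t * relu (sx t * clampc (cv x p) + sT t * (Rv x p - real mm))"
      using dmK[OF t, of p] by (subst z4_unit[OF p t]) simp
  qed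
  also have "\<dots> = (\<Sum>p<nc. hfun (clampc (cv x p)) (Rv x p - real mm))"
    by (simp add: hfun_units)
  finally show ?thesis .
qed

end

lemma hfun_bounds: assumes c: "0 \<le> c" shows "0 \<le> hfun c t" "hfun c t \<le> c"
proof -
  consider "t \<ge> c" | "t \<le> -c" | "-c < t \<and> t < 0" | "0 \<le> t \<and> t < c" by linarith
  hence "0 \<le> hfun c t \<and> hfun c t \<le> c"
  proof cases
    case 1
    hence "relu (c - t) = 0" "relu (c + t) = c + t" "relu t = t" "relu (-t) = 0" "relu c = c"
      using c by (simp_all add: relu_def)
    thus ?thesis using c by (simp add: hfun_def)
  next
    case 2
    hence "relu (c - t) = c - t" "relu (c + t) = 0" "relu t = 0" "relu (-t) = -t" "relu c = c"
      using c by (simp_all add: relu_def)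
    thus ?thesis using c by (simp add: hfun_def)
  next
    case 3
    hence "relu (c - t) = c - t" "relu (c + t) = c + t" "relu t = 0" "relu (-t) = -t" "relu c = c"
      using c by (simp_all add: relu_def)
    thus ?thesis using c 3 by (simp add: hfun_def)
  next
    case 4
    hence "relu (c - t) = c - t" "relu (c + t) = c + t" "relu t = t" "relu (-t) = 0" "relu c = c"
      using c by (simp_all add: relu_def)
    thus ?thesis using c 4 by (simp add: hfun_def)
  qed
  thus "0 \<le> hfun c t" "hfun c t \<le> c" by auto
qed

lemma hfun_int: assumes "0 \<le> c" "c \<le> 1" "t = of_int k"
  shows "hfun c t = (if k = 0 then c else 0)"
proof -
  consider "k = 0" | "k \<ge> 1" | "k \<le> -1" by linarith
  thus ?thesis
  proof cases
    case 1 thus ?thesis using assms by (simp add: hfun_def relu_def)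
  next
    case 2 hence t: "t \<ge> 1" using assms(3) by simp
    hence "relu (c - t) = 0" "relu (c + t) = c + t" "relu t = t" "relu (-t) = 0" "relu c = c"
      using assms by (simp_all add: relu_def)
    thus ?thesis using 2 by (simp add: hfun_def)
  next
    case 3 hence t: "t \<le> -1" using assms(3) by simp
    hence "relu (c - t) = c - t" "relu (c + t) = 0" "relu t = 0" "relu (-t) = -t" "relu c = c"
      using assms by (simp_all add: relu_def)
    thus ?thesis using 3 by (simp add: hfun_def)
  qed
qed

lemma relu_nonneg: "0 \<le> relu z" by (simp add: relu_def)
lemma relu_id: "0 \<le> z \<Longrightarrow> relu z = z" by (simp add: relu_def)

context C3 begin

lemma clampc_bounds: "0 \<le> clampc c" "clampc c \<le> 1"
  by (auto simp: clampc_def relu_def max_def)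

lemma clampc_id: "0 \<le> c \<Longrightarrow> c \<le> 1 \<Longrightarrow> clampc c = c"
  by (auto simp: clampc_def relu_def max_def)

lemma d_ge1: "real d \<ge> 1" using dpos by simp

lemma dpow_ge1: "a \<ge> 0 \<Longrightarrow> real d powr a \<ge> 1"
  using d_ge1 by (simp add: ge_one_powr_ge_zero)

lemma bs_le_d: "bs \<le> d"
proof -
  have "real d powr (2/3) \<le> real d powr 1" by (rule powr_mono) (use d_ge1 in auto)
  hence "real d powr (2/3) \<le> real d" by simp
  thus ?thesis unfolding bs_def block_size_def by (simp add: ceiling_le_iff)
qed

lemma bs_ge: "real bs \<ge> real d powr (2/3)"
proof -
  have "real d powr (2/3) \<le> of_int \<lceil>real d powr (2/3)\<rceil>" by (rule le_of_int_ceiling)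
  thus ?thesis unfolding bs_def block_size_def by linarith
qed

lemma bs_le: "real bs \<le> real d powr (2/3) + 1"
proof -
  have "of_int \<lceil>real d powr (2/3)\<rceil> - 1 < real d powr (2/3)" using ceiling_correct[of "real d powr (2/3)"] by linarith
  moreover have "real d powr (2/3) \<ge> 0" by simp
  moreover have "\<lceil>real d powr (2/3)\<rceil> \<ge> 0" unfolding zero_le_ceiling using calculation(2) by linarith
  ultimately show ?thesis unfolding bs_def block_size_def by simp
qed

lemma nb_real: "real nb < real d / real bs + 1" "real nb \<ge> real d / real bs"
proof -
  have "real d / real bs > 0" using dpos bs_pos by simp
  hence c0: "\<lceil>real d / real bs\<rceil> \<ge> 0" by (simp add: ceiling_le_iff) 
  have "of_int \<lceil>real d / real bs\<rceil> - 1 < real d / real bs \<and> real d / real bs \<le> of_int \<lceil>real d / real bs\<rceil>"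
    by (rule ceiling_correct)
  thus "real nb < real d / real bs + 1" "real nb \<ge> real d / real bs"
    using c0 unfolding nb_def num_blocks_def bs_def[symmetric] by auto
qed

lemma nb_pos: "nb \<ge> 1"
proof -
  have "real d / real bs > 0" using dpos bs_pos by simp
  thus ?thesis using nb_real(2) by linarith
qed

lemma nbbs: "nb * bs < d + bs"
proof -
  have "real nb * real bs < (real d / real bs + 1) * real bs"
    using nb_real(1) bs_pos by (intro mult_strict_right_mono) auto
  also have "\<dots> = real d + real bs" using bs_pos by (simp add: field_simps)
  finally have "real (nb*bs) < real (d + bs)" by simp
  thus ?thesis by linarith
qed

lemma Lw_ge1: "Lw \<ge> 1" unfolding Lw_def by simp
lemma Hw_le: "Hw \<le> int bs" unfolding Hw_def by simp

lemma ww_le_bs: "ww \<le> bs"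
  using Lw_ge1 Hw_le unfolding ww_def by simp

lemma nc_le_nbbs: "nc \<le> nb * bs"
proof -
  have "(nb - 1) * ww \<le> (nb - 1) * bs" using ww_le_bs by simp
  hence "nc \<le> (nb - 1) * bs + bs" unfolding nc_def by simp
  also have "\<dots> = nb * bs" using nb_pos by (cases nb) auto
  finally show ?thesis .
qed

lemma nc_le_dsq: "real nc \<le> real d ^ 2"
proof -
  have "nc < d + bs" using nc_le_nbbs nbbs by simp
  hence "nc < 2*d" using bs_le_d by simp
  hence "real nc \<le> 2 * real d - 1" by linarith
  also have "\<dots> \<le> real d ^ 2"
  proof -
    have "(real d - 1)^2 \<ge> 0" by simp
    thus ?thesis by (simp add: power2_eq_square algebra_simps)
  qed
  finally show ?thesis .
qed

theorem bounded_out: "net_eval d NN x \<in> {- (real d ^ 2) .. real d ^ 2}"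
proof -
  have t: "0 \<le> hfun (clampc (cv x p)) (Rv x p - real mm) \<and> hfun (clampc (cv x p)) (Rv x p - real mm) \<le> 1" for p
    using hfun_bounds[OF clampc_bounds(1)] clampc_bounds(2) by (meson order_trans)
  have "0 \<le> net_eval d NN x" unfolding net_struct using t by (simp add: sum_nonneg)
  moreover have "net_eval d NN x \<le> real nc" unfolding net_struct
    using sum_mono[of "{..<nc}" "\<lambda>p. hfun (clampc (cv x p)) (Rv x p - real mm)" "\<lambda>_. 1"] t by simp
  moreover have "real nc \<le> real d ^ 2" by (rule nc_le_dsq)
  ultimately have "0 \<le> net_eval d NN x" "net_eval d NN x \<le> real d ^ 2" by linarith+
  moreover have "- (real d ^ 2) \<le> 0" by simp
  ultimately show ?thesis by simp
qed

end

lemma abs_if_le: "\<bar>x\<bar> \<le> (B::real) \<Longrightarrow> \<bar>y\<bar> \<le> B \<Longrightarrow> \<bar>if P then x else y\<bar> \<le> B" by simp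

lemma abs_diff_ifs: "0 \<le> (c::real) \<Longrightarrow> \<bar>(if P then c else 0) - (if Q then c else 0)\<bar> \<le> c"
  by (cases P; cases Q) simp_all

lemma sT_bd: "\<bar>sT t\<bar> \<le> 1" by (simp add: sT_def)
lemma sx_bd: "\<bar>sx t\<bar> \<le> 1" by (simp add: sx_def)
lemma sh_bd: "\<bar>sh t\<bar> = 1" by (simp add: sh_def)

context C3 begin

lemma cr_bounds: assumes p: "p < nc" shows "1 \<le> cr p" "cr p \<le> bs"
proof -
  show "1 \<le> cr p" using Lw_ge1 by (auto simp: cr_def)
  show "cr p \<le> bs"
  proof (cases "p < (nb-1)*ww")
    case True
    hence w: "ww > 0" by (cases ww) auto
    hence "Hw - Lw + 1 > 0" unfolding ww_def by simp
    moreover have "p mod ww < ww" using w by simp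
    ultimately have "int (nat Lw + p mod ww) \<le> Hw" using Lw_ge1 unfolding ww_def by linarith
    hence "int (nat Lw + p mod ww) \<le> int bs" using Hw_le by linarith
    hence c: "nat Lw + p mod ww \<le> bs" by (simp only: of_nat_le_iff)
    thus ?thesis using True by (simp add: cr_def)
  next
    case False thus ?thesis using p by (auto simp: cr_def nc_def)
  qed
qed

lemma mm_le: "mm \<le> d"
proof -
  have "real d / 2 \<le> real d" by simp
  hence "\<lceil>real d / 2\<rceil> \<le> \<lceil>real d\<rceil>" by (rule ceiling_mono)
  thus ?thesis unfolding mm_def by simp
qed

lemma weights_ok: assumes dd: "\<delta> * real d \<le> 1" shows "weights_bounded d NN (1/\<delta>)"
proof -
  have id: "real d \<le> 1/\<delta>" using dd dlpos by (simp add: field_simps)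
  hence i1: "1 \<le> 1/\<delta>" using d_ge1 by linarith
  have ip: "0 < 1/\<delta>" using dlpos by simp
  have sTd: "\<bar>sT t\<bar> \<le> 1/\<delta>" for t using sT_bd i1 by (rule order_trans)
  have sxd: "\<bar>sx t\<bar> \<le> 1/\<delta>" for t using sx_bd i1 by (rule order_trans)
  have W1b: "\<bar>W1 j i\<bar> \<le> 1/\<delta>" for j i
    unfolding W1_def Let_def by (intro abs_if_le abs_diff_ifs) (use dlpos i1 ip in simp_all)
  have b1b: "\<bar>b1 j\<bar> \<le> 1/\<delta>" for j using i1 dlpos by (simp add: b1_def)
  have W2b: "\<bar>W2 j i\<bar> \<le> 1/\<delta>" for j i
    unfolding W2_def by (intro abs_if_le) (use dlpos i1 sTd[of "j mod 5"] sxd[of "j mod 5"] in simp_all)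
  have b2b: "\<bar>b2 j\<bar> \<le> 1/\<delta>" if "j < n2" for j
  proof (cases "j < M2 \<and> el j < d")
    case True
    hence "j < (nc*bs)*5" unfolding M2_def by (simp add: algebra_simps)
    hence "j div 5 < nc*bs" by (rule less_mult_imp_div_less)
    hence p: "(j div 5) div bs < nc" by (simp add: less_mult_imp_div_less)
    note cb = cr_bounds[OF p]
    have "\<bar>1 - real (cr ((j div 5) div bs))\<bar> \<le> real bs" using cb by simp
    also have "\<dots> \<le> 1/\<delta>" using bs_le_d id by simp
    finally have "\<bar>sT (j mod 5)\<bar> * \<bar>1 - real (cr ((j div 5) div bs))\<bar> \<le> 1 * (1/\<delta>)"
      using sT_bd by (intro mult_mono) auto
    thus ?thesis using True by (simp add: b2_def abs_mult)
  next
    case False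
    hence "b2 j = 0" unfolding b2_def by (simp only: if_False)
    thus ?thesis using ip by simp
  qed
  have W3b: "\<bar>W3 j i\<bar> \<le> 1/\<delta>" for j i
    unfolding W3_def by (intro abs_if_le) (use dlpos i1 ip sh_bd[of "i mod 5"] dlpos in simp_all)
  have b3b: "\<bar>b3 j\<bar> \<le> 1/\<delta>" for j using i1 dlpos by (simp add: b3_def)
  have W4b: "\<bar>W4 j i\<bar> \<le> 1/\<delta>" for j i
  proof -
    have "\<bar>- sT (j mod 5) * (if i mod 2 = 0 then 1 else -1)\<bar> \<le> 1/\<delta>"
      using sTd[of "j mod 5"] by (cases "i mod 2 = 0") simp_all
    thus ?thesis unfolding W4_def
      by (intro abs_if_le) (use dlpos i1 sxd[of "j mod 5"] in simp_all)
  qed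
  have b4b: "\<bar>b4 j\<bar> \<le> 1/\<delta>" for j
  proof -
    have "\<bar>real d - real mm\<bar> \<le> real d" using mm_le by simp
    hence "\<bar>sT (j mod 5)\<bar> * \<bar>real d - real mm\<bar> \<le> 1 * real d" using sT_bd by (intro mult_mono) auto
    thus ?thesis using id by (simp add: b4_def abs_mult)
  qed
  have wob: "\<bar>wo i\<bar> \<le> 1/\<delta>" for i using i1 dlpos sh_bd by (simp add: wo_def)
  show ?thesis unfolding weights_bounded_def NN_def
    using W1b b1b W2b b2b W3b b3b W4b b4b wob ip by simp
qed

end

lemma rank_lt:
  assumes "finite I" "j \<in> I" "u < x j"
  shows "rank_in I x u < rank_in I x (x j)"
proof -
  have sub: "{i\<in>I. x i \<le> u} \<subseteq> {i\<in>I. x i \<le> x j}" using assms(3) by auto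
  have "j \<notin> {i\<in>I. x i \<le> u}" "j \<in> {i\<in>I. x i \<le> x j}" using assms(2,3) by auto
  hence "{i\<in>I. x i \<le> u} \<subset> {i\<in>I. x i \<le> x j}" using sub by blast
  thus ?thesis unfolding rank_in_def using assms(1) by (intro psubset_card_mono) auto
qed

lemma rank_inj:
  assumes "finite I" "i \<in> I" "j \<in> I" "rank_in I x (x i) = rank_in I x (x j)"
  shows "x i = x j"
proof (rule ccontr)
  assume "x i \<noteq> x j"
  hence "x i < x j \<or> x j < x i" by linarith
  thus False using rank_lt[OF assms(1) assms(3), of "x i" x] rank_lt[OF assms(1) assms(2), of "x j" x] assms(4)
    by auto
qed

lemma rank_ge1: assumes "finite I" "i \<in> I" shows "1 \<le> rank_in I x (x i)"
proof -
  have "{j\<in>I. x j \<le> x i} \<noteq> {}" using assms by auto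
  thus ?thesis unfolding rank_in_def using assms(1) by (simp add: Suc_le_eq card_gt_0_iff)
qed

lemma rank_le_card: assumes "finite I" shows "rank_in I x v \<le> card I"
  unfolding rank_in_def using assms by (intro card_mono) auto

lemma sum_indicator: "finite A \<Longrightarrow> (\<Sum>a\<in>A. if P a then 1 else 0) = real (card {a\<in>A. P a})"
  by (simp add: sum.inter_filter[symmetric])

context C3 begin

definition "good x \<longleftrightarrow> in_S d \<delta> x \<and> (\<forall>i<d. x i \<noteq> 0)"

lemma good_pos: "good x \<Longrightarrow> i < d \<Longrightarrow> \<delta> \<le> x i \<and> x i \<le> 1 - \<delta>"
  unfolding good_def in_S_def by blast

lemma good_sep: "good x \<Longrightarrow> i < d \<Longrightarrow> j < d \<Longrightarrow> i \<noteq> j \<Longrightarrow> \<delta> \<le> \<bar>x i - x j\<bar>"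
  unfolding good_def in_S_def by blast

lemma good_inj: "good x \<Longrightarrow> i < d \<Longrightarrow> j < d \<Longrightarrow> x i = x j \<Longrightarrow> i = j"
  using good_sep[of x i j] dlpos by force

lemma block_iff: "j \<in> block d k \<longleftrightarrow> j < d \<and> j div bs = k"
proof -
  have "(k*bs \<le> j \<and> j < (k+1)*bs) \<longleftrightarrow> j div bs = k"
  proof
    assume "k*bs \<le> j \<and> j < (k+1)*bs"
    thus "j div bs = k" by (intro div_nat_eqI) (auto simp: algebra_simps)
  next
    assume "j div bs = k"
    hence r: "j = k*bs + j mod bs" by (metis div_mult_mod_eq)
    have "j mod bs < bs" using bs_pos by simp
    thus "k*bs \<le> j \<and> j < (k+1)*bs" by (subst (1 2) r) simp
  qed
  thus ?thesis unfolding block_def bs_def[symmetric] by auto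
qed

lemma finite_block: "finite (block d k)" unfolding block_def by simp

lemma block_sub: "block d k \<subseteq> {..<d}" using block_iff by auto

lemma card_block: "card (block d k) \<le> bs"
proof -
  have "block d k \<subseteq> {k*bs..<k*bs+bs}" unfolding block_def bs_def[symmetric] by auto
  from card_mono[OF _ this] show ?thesis by simp
qed

lemma cmpv_good: assumes g: "good x" and a: "a < d" and u: "u < bs"
  shows "cmpv x a u = (if prt a u < d \<and> x (prt a u) < x a then 1 else 0)"
proof (cases "prt a u < d")
  case False thus ?thesis using z1_a[OF a u] z1_b[OF a u] by (simp add: cmpv_def)
next
  case True
  let ?D = "x a - x (prt a u)"
  have c: "cmpv x a u = relu (?D/\<delta>) - relu (?D/\<delta> - 1)"
    using z1_a[OF a u] z1_b[OF a u] True by (simp add: cmpv_def)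
  show ?thesis
  proof (cases "prt a u = a")
    case True thus ?thesis using c by (simp add: relu_def)
  next
    case False
    hence sep: "\<delta> \<le> \<bar>?D\<bar>" using good_sep[OF g a \<open>prt a u < d\<close>] by auto
    show ?thesis
    proof (cases "x (prt a u) < x a")
      case True
      hence "\<delta> \<le> ?D" using sep by linarith
      hence "1 \<le> ?D/\<delta>" using dlpos by (simp add: field_simps)
      thus ?thesis using c True \<open>prt a u < d\<close> by (simp add: relu_def)
    next
      case F: False
      hence "?D \<le> 0" by linarith
      hence "?D/\<delta> \<le> 0" using dlpos by (simp add: divide_nonpos_pos)
      thus ?thesis using c F by (simp add: relu_def)
    qed
  qed
qed

lemma rankv_good: assumes g: "good x" and e: "e < d"
  shows "rankv x e = real (rank_in (block d (e div bs)) x (x e))"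
proof -
  let ?k = "e div bs"
  let ?A = "{u\<in>{..<bs}. prt e u < d \<and> x (prt e u) < x e}"
  have "(\<Sum>u<bs. cmpv x e u) = (\<Sum>u<bs. if prt e u < d \<and> x (prt e u) < x e then 1 else 0)"
    by (intro sum.cong refl) (use g e in \<open>simp add: cmpv_good\<close>)
  also have "\<dots> = real (card ?A)" by (rule sum_indicator) simp
  also have "card ?A = card (prt e ` ?A)" by (rule card_image[symmetric]) (simp add: inj_on_def prt_def)
  also have "prt e ` ?A = {j\<in>block d ?k. x j < x e}"
  proof (intro set_eqI iffI)
    fix j assume "j \<in> prt e ` ?A"
    then obtain u where "u < bs" "prt e u < d" "x (prt e u) < x e" "j = prt e u" by auto
    thus "j \<in> {j\<in>block d ?k. x j < x e}" by (auto simp: block_iff prt_def)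
  next
    fix j assume "j \<in> {j\<in>block d ?k. x j < x e}"
    hence j: "j < d" "j div bs = ?k" "x j < x e" by (auto simp: block_iff)
    have "j = prt e (j mod bs)" unfolding prt_def using j(2) by (metis div_mult_mod_eq)
    moreover have "j mod bs < bs" using bs_pos by simp
    ultimately show "j \<in> prt e ` ?A" using j by (metis (no_types, lifting) image_eqI lessThan_iff mem_Collect_eq)
  qed
  finally have S: "(\<Sum>u<bs. cmpv x e u) = real (card {j\<in>block d ?k. x j < x e})" .
  have eb: "e \<in> block d ?k" using e by (simp add: block_iff)
  have "{j\<in>block d ?k. x j \<le> x e} = insert e {j\<in>block d ?k. x j < x e}"
  proof (intro set_eqI iffI)
    fix j assume j: "j \<in> {j\<in>block d ?k. x j \<le> x e}"
    hence "j < d" by (simp add: block_iff)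
    thus "j \<in> insert e {j\<in>block d ?k. x j < x e}" using j good_inj[OF g \<open>j<d\<close> e] by force
  qed (use eb in auto)
  hence "rank_in (block d ?k) x (x e) = Suc (card {j\<in>block d ?k. x j < x e})"
    unfolding rank_in_def using finite_block by simp
  thus ?thesis using S by (simp add: rankv_def)
qed

lemma cv_sum: assumes g: "good x"
  shows "cv x p = (\<Sum>u<bs. if ck p*bs+u < d \<and> rank_in (block d (ck p)) x (x (ck p*bs+u)) = cr p then x (ck p*bs+u) else 0)"
  unfolding cv_def
proof (intro sum.cong refl)
  fix u assume "u \<in> {..<bs}"
  hence u: "u < bs" by simp
  let ?e = "ck p*bs+u"
  show "(if ?e < d then hfun (relu (x ?e)) (rankv x ?e - real (cr p)) else 0) =
        (if ?e < d \<and> rank_in (block d (ck p)) x (x ?e) = cr p then x ?e else 0)"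
  proof (cases "?e < d")
    case True
    have ed: "?e div bs = ck p" using u by simp
    have xe: "\<delta> \<le> x ?e" "x ?e \<le> 1 - \<delta>" using good_pos[OF g True] by auto
    hence rx: "relu (x ?e) = x ?e" using dlpos by (simp add: relu_def)
    have "rankv x ?e - real (cr p) = of_int (int (rank_in (block d (ck p)) x (x ?e)) - int (cr p))"
      using rankv_good[OF g True] ed by simp
    from hfun_int[OF _ _ this, of "x ?e"] xe dlpos
    show ?thesis using True rx by auto
  qed simp
qed

lemma cv_hit: assumes g: "good x" and e: "e \<in> block d (ck p)" and r: "rank_in (block d (ck p)) x (x e) = cr p"
  shows "cv x p = x e"
proof -
  have ed: "e < d" "e div bs = ck p" using e by (auto simp: block_iff)
  have "cv x p = (\<Sum>u<bs. if u = e mod bs then x e else 0)"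
    unfolding cv_sum[OF g]
  proof (intro sum.cong refl)
    fix u assume "u \<in> {..<bs}" hence u: "u < bs" by simp
    let ?e = "ck p*bs+u"
    show "(if ?e < d \<and> rank_in (block d (ck p)) x (x ?e) = cr p then x ?e else 0) = (if u = e mod bs then x e else 0)"
    proof (cases "u = e mod bs")
      case True
      hence "?e = e" using ed(2) by (metis div_mult_mod_eq)
      thus ?thesis using True ed r by simp
    next
      case False
      have "?e \<noteq> e" using False u by (metis ed(2) mod_mult_self3 mod_less)
      moreover have "?e < d \<Longrightarrow> rank_in (block d (ck p)) x (x ?e) = cr p \<Longrightarrow> ?e = e"
      proof -
        assume a: "?e < d" "rank_in (block d (ck p)) x (x ?e) = cr p"
        have eb: "?e \<in> block d (ck p)" using a(1) u by (simp add: block_iff)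
        have "x ?e = x e" by (rule rank_inj[OF finite_block eb e]) (use a r in simp)
        thus "?e = e" using good_inj[OF g a(1) ed(1)] by simp
      qed
      ultimately show ?thesis using False by auto
    qed
  qed
  also have "\<dots> = x e" using bs_pos by (simp add: sum.delta)
  finally show ?thesis .
qed

lemma cv_cases: assumes g: "good x"
  shows "cv x p = 0 \<or> (\<exists>e\<in>block d (ck p). rank_in (block d (ck p)) x (x e) = cr p \<and> cv x p = x e)"
proof (cases "\<exists>e\<in>block d (ck p). rank_in (block d (ck p)) x (x e) = cr p")
  case True thus ?thesis using cv_hit[OF g] by blast
next
  case False
  have "cv x p = 0" unfolding cv_sum[OF g]
  proof (intro sum.neutral ballI)
    fix u assume "u \<in> {..<bs}"
    hence "ck p*bs+u < d \<Longrightarrow> ck p*bs+u \<in> block d (ck p)" by (simp add: block_iff)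
    thus "(if ck p*bs+u < d \<and> rank_in (block d (ck p)) x (x (ck p*bs+u)) = cr p then x (ck p*bs+u) else 0) = 0"
      using False by auto
  qed
  thus ?thesis by simp
qed

lemma Rv_good: assumes g: "good x" and c: "cv x p = 0 \<or> (\<exists>e<d. cv x p = x e)"
  shows "Rv x p = real (rank_in {..<d} x (cv x p))"
proof -
  let ?c = "cv x p"
  have T: "relu ((relu (relu (x a)) - ?c)/\<delta>) - relu ((relu (relu (x a)) - ?c)/\<delta> - 1) = (if ?c < x a then 1 else 0)"
    if a: "a < d" for a
  proof -
    have xa: "\<delta> \<le> x a" using good_pos[OF g a] by auto
    hence rr: "relu (relu (x a)) = x a" using dlpos by (simp add: relu_def)
    let ?D = "x a - ?c"
    have "\<delta> \<le> ?D \<or> ?D \<le> - \<delta> \<or> ?D = 0"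
    proof (cases "?c = 0")
      case True thus ?thesis using xa by simp
    next
      case False
      then obtain e where e: "e < d" "?c = x e" using c by auto
      show ?thesis
      proof (cases "a = e")
        case True thus ?thesis using e by simp
      next
        case False thus ?thesis using good_sep[OF g a e(1) False] e by linarith
      qed
    qed
    moreover
    { assume "\<delta> \<le> ?D" hence "1 \<le> ?D/\<delta>" using dlpos by (simp add: field_simps)
      hence ?thesis using \<open>\<delta> \<le> ?D\<close> dlpos rr by (simp add: relu_def) }
    moreover
    { assume "?D \<le> - \<delta>" hence "?D/\<delta> \<le> 0" using dlpos by (simp add: divide_nonpos_pos)
      hence ?thesis using \<open>?D \<le> - \<delta>\<close> dlpos rr by (simp add: relu_def) }
    moreover
    { assume "?D = 0" hence ?thesis using rr by (simp add: relu_def) }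
    ultimately show ?thesis by blast
  qed
  have "Rv x p = real d - (\<Sum>a<d. if ?c < x a then 1 else 0)"
    unfolding Rv_def by (simp add: T)
  also have "(\<Sum>a<d. if ?c < x a then 1 else (0::real)) = real d - (\<Sum>a<d. if x a \<le> ?c then 1 else 0)"
  proof -
    have "(\<Sum>a<d. if ?c < x a then 1 else (0::real)) + (\<Sum>a<d. if x a \<le> ?c then 1 else 0) = (\<Sum>a<d. 1)"
      unfolding sum.distrib[symmetric] by (intro sum.cong refl) auto
    thus ?thesis by simp
  qed
  also have "(\<Sum>a<d. if x a \<le> ?c then 1 else (0::real)) = real (rank_in {..<d} x ?c)"
    unfolding rank_in_def by (rule sum_indicator) simp
  finally show ?thesis by simp
qed

end

context C3 begin

lemma mm_ge1: "1 \<le> mm"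
proof -
  have "real d / 2 > 0" using dpos by simp
  hence "\<lceil>real d / 2\<rceil> \<ge> 1" by (simp add: one_le_ceiling)
  thus ?thesis unfolding mm_def by linarith
qed

lemma med_exists: assumes g: "good x" shows "\<exists>i<d. rank_in {..<d} x (x i) = mm"
proof -
  let ?r = "\<lambda>i. rank_in {..<d} x (x i)"
  have inj: "inj_on ?r {..<d}"
  proof (rule inj_onI)
    fix i j assume "i \<in> {..<d}" "j \<in> {..<d}" "?r i = ?r j"
    hence "x i = x j" using rank_inj[of "{..<d}" i j x] by simp
    thus "i = j" using good_inj[OF g] \<open>i \<in> {..<d}\<close> \<open>j \<in> {..<d}\<close> by simp
  qed
  have sub: "?r ` {..<d} \<subseteq> {1..d}"
  proof
    fix y assume "y \<in> ?r ` {..<d}"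
    then obtain i where i: "i < d" "y = ?r i" by auto
    have "1 \<le> ?r i" by (rule rank_ge1) (use i in auto)
    moreover have "?r i \<le> d" using rank_le_card[of "{..<d}" x "x i"] by simp
    ultimately show "y \<in> {1..d}" using i by simp
  qed
  have "card (?r ` {..<d}) = card {1..d}" using card_image[OF inj] by simp
  hence "?r ` {..<d} = {1..d}" using card_subset_eq[OF _ sub] by simp
  moreover have "mm \<in> {1..d}" using mm_ge1 mm_le by simp
  ultimately have "mm \<in> ?r ` {..<d}" by simp
  then obtain i where "i \<in> {..<d}" "mm = ?r i" by (rule imageE)
  thus ?thesis by auto
qed

lemma median_eq: assumes g: "good x" and i: "i < d" and r: "rank_in {..<d} x (x i) = mm"
  shows "median d x = x i"
  unfolding median_def
proof (rule the_equality)
  show "(\<exists>j<d. x j = x i) \<and> rank_in {..<d} x (x i) = nat \<lceil>real d / 2\<rceil>" using i r by (auto simp: mm_def)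
next
  fix v assume "(\<exists>j<d. x j = v) \<and> rank_in {..<d} x v = nat \<lceil>real d / 2\<rceil>"
  then obtain j where j: "j < d" "x j = v" "rank_in {..<d} x (x j) = mm" by (auto simp: mm_def)
  show "v = x i" using rank_inj[of "{..<d}" j i x] j i r by simp
qed

lemma ckcr_inj: assumes p1: "p1 < nc" and p2: "p2 < nc" and e1: "ck p1 = ck p2" and e2: "cr p1 = cr p2"
  shows "p1 = p2"
proof (cases "p1 < (nb-1)*ww")
  case T1: True
  show ?thesis
  proof (cases "p2 < (nb-1)*ww")
    case True
    hence "p1 div ww = p2 div ww" "p1 mod ww = p2 mod ww" using T1 e1 e2 by (auto simp: ck_def cr_def)
    thus ?thesis by (metis div_mult_mod_eq)
  next
    case False
    have "p1 div ww < nb - 1" using T1 by (simp add: less_mult_imp_div_less)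
    thus ?thesis using e1 T1 False by (simp add: ck_def)
  qed
next
  case F1: False
  show ?thesis
  proof (cases "p2 < (nb-1)*ww")
    case True
    have "p2 div ww < nb - 1" using True by (simp add: less_mult_imp_div_less)
    thus ?thesis using e1 True F1 by (simp add: ck_def)
  next
    case False
    thus ?thesis using F1 e2 by (simp add: cr_def)
  qed
qed

lemma pstar: assumes g: "good x" and sc: "success_cond \<gamma> d x" and i: "i < d" and med: "median d x = x i"
  shows "\<exists>p<nc. ck p = i div bs \<and> cr p = rank_in (block d (i div bs)) x (x i)"
proof -
  obtain k where k: "k < nb" "median d x \<in> y_block \<gamma> d x k"
    using sc unfolding success_cond_def nb_def by blast
  let ?r = "rank_in (block d k) x (x i)"
  show ?thesis
  proof (cases "k + 1 = nb")
    case True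
    hence "x i \<in> x ` block d k" using k med unfolding y_block_def nb_def by simp
    then obtain j where j: "j \<in> block d k" "x i = x j" by auto
    have "j = i" using good_inj[OF g _ i] j block_iff by metis
    hence ib: "i \<in> block d k" using j by simp
    hence kk: "k = i div bs" by (simp add: block_iff)
    have r1: "1 \<le> ?r" by (rule rank_ge1[OF finite_block ib])
    have r2: "?r \<le> bs" using rank_le_card[OF finite_block, of k x "x i"] card_block[of k] by simp
    let ?p = "(nb-1)*ww + (?r - 1)"
    have "?p < nc" using r1 r2 unfolding nc_def by simp
    moreover have "ck ?p = k" using True by (simp add: ck_def)
    moreover have "cr ?p = ?r" using r1 by (simp add: cr_def)
    ultimately show ?thesis using kk by blast
  next
    case False
    hence "x i \<in> x ` {j\<in>block d k. \<lfloor>real d powr (2/3) / 2 - real d powr (1/3 + \<gamma>)\<rfloor> \<le> int (rank_in (block d k) x (x j)) \<and>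
             int (rank_in (block d k) x (x j)) \<le> \<lceil>real d powr (2/3) / 2 + real d powr (1/3 + \<gamma>)\<rceil>}"
      using k med unfolding y_block_def nb_def by simp
    then obtain j where j: "j \<in> block d k" "x i = x j"
      "\<lfloor>real d powr (2/3) / 2 - real d powr (1/3 + \<gamma>)\<rfloor> \<le> int (rank_in (block d k) x (x j))"
      "int (rank_in (block d k) x (x j)) \<le> \<lceil>real d powr (2/3) / 2 + real d powr (1/3 + \<gamma>)\<rceil>" by auto
    have "j = i" using good_inj[OF g _ i] j block_iff by metis
    hence ib: "i \<in> block d k" using j by simp
    hence kk: "k = i div bs" by (simp add: block_iff)
    have r1: "1 \<le> ?r" by (rule rank_ge1[OF finite_block ib])
    have r2: "?r \<le> bs" using rank_le_card[OF finite_block, of k x "x i"] card_block[of k] by simp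
    have L: "Lw \<le> int ?r" using j \<open>j = i\<close> r1 unfolding Lw_def by simp
    have Hh: "int ?r \<le> Hw" using j \<open>j = i\<close> r2 unfolding Hw_def by simp
    have kn: "k < nb - 1" using k(1) False by simp
    have wpos: "?r - nat Lw < ww" using L Hh unfolding ww_def by linarith
    let ?p = "k*ww + (?r - nat Lw)"
    have "?p < (k+1)*ww" using wpos by simp
    also have "\<dots> \<le> (nb-1)*ww" using kn by (intro mult_le_mono1) simp
    finally have pl: "?p < (nb-1)*ww" .
    hence "?p < nc" unfolding nc_def by simp
    have pm: "?p div ww = k" "?p mod ww = ?r - nat Lw" using dmK[OF wpos, of k] by simp_all
    have c1: "ck ?p = k" unfolding ck_def if_P[OF pl] pm(1) ..
    have c2: "cr ?p = nat Lw + (?r - nat Lw)" unfolding cr_def if_P[OF pl] pm(2) ..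
    have "nat Lw \<le> ?r" using L by linarith
    hence c3: "cr ?p = ?r" using c2 by simp
    show ?thesis using kk c1 c3 \<open>?p < nc\<close> by blast
  qed
qed

theorem correct: assumes g: "good x" and sc: "success_cond \<gamma> d x"
  shows "net_eval d NN x = median d x"
proof -
  obtain i where i: "i < d" "rank_in {..<d} x (x i) = mm" using med_exists[OF g] by blast
  have med: "median d x = x i" by (rule median_eq[OF g i])
  obtain ps where ps: "ps < nc" "ck ps = i div bs" "cr ps = rank_in (block d (i div bs)) x (x i)"
    using pstar[OF g sc i(1) med] by blast
  have ib: "i \<in> block d (ck ps)" using i ps by (simp add: block_iff)
  have cvs: "cv x ps = x i" by (rule cv_hit[OF g ib]) (use ps in simp)
  have xi: "\<delta> \<le> x i" using good_pos[OF g i(1)] by simp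
  have tm: "hfun (clampc (cv x p)) (Rv x p - real mm) = (if p = ps then x i else 0)" if p: "p < nc" for p
  proof -
    let ?c = "cv x p"
    have cc: "?c = 0 \<or> (\<exists>e\<in>block d (ck p). rank_in (block d (ck p)) x (x e) = cr p \<and> ?c = x e)"
      by (rule cv_cases[OF g])
    have c01: "0 \<le> ?c \<and> ?c \<le> 1"
    proof (cases "?c = 0")
      case False
      then obtain e where "e \<in> block d (ck p)" "?c = x e" using cc by blast
      hence "e < d" "?c = x e" by (auto simp: block_iff)
      thus ?thesis using good_pos[OF g \<open>e < d\<close>] dlpos by simp
    qed simp
    hence clc: "clampc ?c = ?c" by (simp add: clampc_id)
    have "?c = 0 \<or> (\<exists>e<d. ?c = x e)" using cc block_sub by blast
    hence Rv: "Rv x p - real mm = of_int (int (rank_in {..<d} x ?c) - int mm)"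
      using Rv_good[OF g] by simp
    have H: "hfun (clampc ?c) (Rv x p - real mm) = (if rank_in {..<d} x ?c = mm then ?c else 0)"
      unfolding clc using hfun_int[OF _ _ Rv] c01 by simp
    show ?thesis
    proof (cases "?c = 0")
      case True
      have "{a\<in>{..<d}. x a \<le> 0} = {}" using good_pos[OF g] dlpos by force
      hence "rank_in {..<d} x ?c = 0" using True unfolding rank_in_def by simp
      moreover have "p \<noteq> ps" using True cvs xi dlpos by auto
      ultimately show ?thesis using H mm_ge1 by simp
    next
      case False
      then obtain e where e: "e \<in> block d (ck p)" "rank_in (block d (ck p)) x (x e) = cr p" "?c = x e"
        using cc by blast
      have ed: "e < d" "e div bs = ck p" using e(1) by (auto simp: block_iff)
      have "rank_in {..<d} x (x e) = mm \<longleftrightarrow> p = ps"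
      proof
        assume "rank_in {..<d} x (x e) = mm"
        hence "x e = x i" using rank_inj[of "{..<d}" e i x] ed i by simp
        hence ei: "e = i" using good_inj[OF g ed(1) i(1)] by simp
        have k1: "ck p = i div bs" using ed(2) ei by simp
        have "cr p = rank_in (block d (i div bs)) x (x i)" using e(2) ei k1 by simp
        hence k2: "cr p = cr ps" using ps(3) by simp
        have k3: "ck p = ck ps" using k1 ps(2) by simp
        show "p = ps" by (rule ckcr_inj[OF p ps(1) k3 k2])
      next
        assume "p = ps"
        hence "x e = x i" using e(3) cvs by simp
        thus "rank_in {..<d} x (x e) = mm" using i by simp
      qed
      thus ?thesis using H e(3) cvs by auto
    qed
  qed
  have "net_eval d NN x = (\<Sum>p<nc. if p = ps then x i else 0)"
    unfolding net_struct by (intro sum.cong refl) (simp add: tm)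
  also have "\<dots> = x i" using ps(1) by simp
  finally show ?thesis using med by simp
qed

end

context C3 begin

lemma width_bd: "real (net_width NN) \<le> 121 * real d powr (5/3 + \<gamma>)"
proof -
  define D where "D = real d"
  define P where "P a = D powr a" for a
  have D1: "D \<ge> 1" unfolding D_def using d_ge1 .
  have Pge: "a \<ge> 0 \<Longrightarrow> P a \<ge> 1" for a unfolding P_def D_def by (rule dpow_ge1)
  have Pmono: "a \<le> b \<Longrightarrow> P a \<le> P b" for a b unfolding P_def using D1 by (intro powr_mono) auto
  have Padd: "P a * P b = P (a + b)" for a b unfolding P_def by (simp add: powr_add)
  have P1: "P 1 = D" unfolding P_def using D1 by simp
  define X where "X = P (1/3)"
  define Y where "Y = P (2/3)"
  define Z where "Z = P (1/3 + \<gamma>)"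
  define W where "W = P (2/3 + \<gamma>)"
  define V where "V = P (5/3 + \<gamma>)"
  have X1: "X \<ge> 1" and Y1: "Y \<ge> 1" and Z1: "Z \<ge> 1" and W1: "W \<ge> 1" and V1: "V \<ge> 1"
    unfolding X_def Y_def Z_def W_def V_def using gpos by (auto intro: Pge)
  have XY: "X * Y = D" unfolding X_def Y_def Padd P1[symmetric] by simp
  have XZ: "X * Z = W" unfolding X_def Z_def W_def Padd by (simp add: algebra_simps)
  have DY: "D * Y \<le> V" unfolding Y_def V_def P1[symmetric] Padd using gpos by (intro Pmono) simp
  have YW: "Y * W \<le> V" unfolding Y_def V_def W_def Padd using gpos by (intro Pmono) simp
  have DW: "D * W = V" unfolding W_def V_def P1[symmetric] Padd by (simp add: algebra_simps)
  have DV: "D \<le> V" unfolding V_def P1[symmetric] using gpos by (intro Pmono) simp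
  have WV: "W \<le> V" unfolding V_def W_def by (intro Pmono) simp
  have YW': "Y \<le> W" unfolding Y_def W_def using gpos by (intro Pmono) simp
  have sb: "real bs \<le> 2 * Y" using bs_le Y1 unfolding Y_def P_def D_def by simp
  have sb0: "real bs \<ge> Y" using bs_ge unfolding Y_def P_def D_def by simp
  have nbb: "real nb \<le> 2 * X"
  proof -
    have "D / real bs \<le> D / Y" using sb0 Y1 D1 by (intro divide_left_mono) auto
    also have "\<dots> = X" using XY Y1 by (simp add: field_simps)
    finally show ?thesis using nb_real(1) X1 unfolding D_def by simp
  qed
  have wwb: "real ww \<le> 5 * Z"
  proof -
    let ?A = "real d powr (2/3) / 2" and ?B = "real d powr (1/3 + \<gamma>)"
    have "Hw \<le> \<lceil>?A + ?B\<rceil>" unfolding Hw_def by simp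
    moreover have "real_of_int \<lceil>?A + ?B\<rceil> \<le> ?A + ?B + 1" by (rule of_int_ceiling_le_add_one)
    moreover have "Lw \<ge> \<lfloor>?A - ?B\<rfloor>" unfolding Lw_def by simp
    moreover have "real_of_int \<lfloor>?A - ?B\<rfloor> \<ge> ?A - ?B - 1" using floor_correct[of "?A - ?B"] by linarith
    ultimately have "real_of_int (Hw - Lw + 1) \<le> 2 * ?B + 3" by linarith
    moreover have "?B = Z" unfolding Z_def P_def D_def ..
    ultimately have "real_of_int (Hw - Lw + 1) \<le> 2 * Z + 3" by simp
    hence "real ww \<le> 2 * Z + 3" unfolding ww_def using Z1 by (cases "Hw - Lw + 1 \<ge> 0") auto
    thus ?thesis using Z1 by simp
  qed
  have ncb: "real nc \<le> 12 * W"
  proof -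
    have "real nc = real (nb - 1) * real ww + real bs" unfolding nc_def by simp
    also have "\<dots> \<le> real nb * real ww + real bs" by (intro add_right_mono mult_right_mono) auto
    also have "\<dots> \<le> (2 * X) * (5 * Z) + 2 * Y" using nbb wwb sb X1 by (intro add_mono mult_mono) auto
    also have "\<dots> = 10 * W + 2 * Y" using XZ by (simp add: algebra_simps)
    also have "\<dots> \<le> 12 * W" using YW' by simp
    finally show ?thesis .
  qed
  have nc0: "real nc \<ge> 0" by simp
  have b1: "real n1 \<le> 121 * V"
  proof -
    have "real n1 = 2 * D * real bs + D" unfolding n1_def M1_def D_def by simp
    also have "\<dots> \<le> 2 * D * (2 * Y) + D" using sb D1 by (intro add_mono mult_left_mono) auto
    also have "\<dots> = 4 * (D * Y) + D" by simp
    also have "\<dots> \<le> 121 * V" using DY DV V1 by linarith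
    finally show ?thesis .
  qed
  have b2: "real n2 \<le> 121 * V"
  proof -
    have "real n2 = 5 * (real nc * real bs) + D" unfolding n2_def M2_def D_def by simp
    also have "\<dots> \<le> 5 * ((12 * W) * (2 * Y)) + D" using ncb sb W1 by (intro add_mono mult_left_mono mult_mono) auto
    also have "\<dots> \<le> 121 * V" using YW DV by (simp add: algebra_simps)
    finally show ?thesis .
  qed
  have b3: "real n3 \<le> 121 * V"
  proof -
    have "real n3 = 2 * real nc * D + 2 * real nc" unfolding n3_def M3_def D_def by simp
    also have "\<dots> \<le> 4 * (real nc * D)"
    proof -
      have "real nc * 1 \<le> real nc * D" using mult_left_mono[OF D1 nc0] .
      thus ?thesis by (simp add: algebra_simps)
    qed
    also have "\<dots> \<le> 4 * ((12 * W) * D)" using ncb D1 by (intro mult_left_mono mult_right_mono) auto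
    also have "\<dots> = 48 * V" using DW by (simp add: algebra_simps)
    also have "\<dots> \<le> 121 * V" using V1 by simp
    finally show ?thesis .
  qed
  have b4: "real n4 \<le> 121 * V"
  proof -
    have "real n4 = 5 * real nc" unfolding n4_def by simp
    also have "\<dots> \<le> 60 * W" using ncb by simp
    also have "\<dots> \<le> 121 * V" using WV W1 by simp
    finally show ?thesis .
  qed
  have V0: "0 \<le> 121 * V" using V1 by simp
  have "net_width NN \<in> {0, n1, n2, n3, n4}"
  proof -
    have "net_width NN = Max {0, n1, n2, n3, n4}" unfolding net_width_def NN_def by simp
    moreover have "Max {0, n1, n2, n3, n4} \<in> {0, n1, n2, n3, n4}" by (rule Max_in) auto
    ultimately show ?thesis by simp
  qed
  hence "real (net_width NN) \<le> 121 * V" using b1 b2 b3 b4 V0 by auto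
  thus ?thesis unfolding V_def P_def D_def .
qed

end

lemma sep_bound:
  fixes V :: "real set"
  assumes "finite V" "card V = Suc n" "V \<subseteq> {a..b}" "\<forall>u\<in>V. \<forall>v\<in>V. u \<noteq> v \<longrightarrow> \<delta> \<le> \<bar>u - v\<bar>"
  shows "real n * \<delta> \<le> b - a"
  using assms
proof (induction n arbitrary: V b)
  case 0
  then obtain v where "V = {v}" by (metis One_nat_def card_1_singletonE)
  thus ?case using 0 by auto
next
  case (Suc n)
  have ne: "V \<noteq> {}" using Suc.prems(2) by auto
  define m where "m = Max V"
  have mV: "m \<in> V" unfolding m_def using Suc.prems(1) ne by simp
  have mb: "m \<le> b" using mV Suc.prems(3) by auto
  let ?V = "V - {m}"
  have f: "finite ?V" using Suc.prems(1) by simp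
  have c: "card ?V = Suc n" using Suc.prems(2) mV Suc.prems(1) by simp
  have s: "?V \<subseteq> {a..m - \<delta>}"
  proof
    fix v assume v: "v \<in> ?V"
    hence "v \<le> m" unfolding m_def using Suc.prems(1) by simp
    moreover have "\<delta> \<le> \<bar>v - m\<bar>" using Suc.prems(4) v mV by auto
    moreover have "a \<le> v" using v Suc.prems(3) by auto
    ultimately show "v \<in> {a..m - \<delta>}" by simp
  qed
  have "real n * \<delta> \<le> (m - \<delta>) - a" by (rule Suc.IH[OF f c s]) (use Suc.prems(4) in blast)
  thus ?case using mb by (simp add: algebra_simps)
qed

lemma good_small_delta:
  assumes d: "d > 0" and dl: "\<delta> > 0" and S: "in_S d \<delta> x" and nz: "\<forall>i<d. x i \<noteq> 0"
  shows "\<delta> * real d \<le> 1"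
proof -
  have pos: "\<delta> \<le> x i \<and> x i \<le> 1 - \<delta>" if "i < d" for i using S nz that unfolding in_S_def by blast
  have sep: "\<delta> \<le> \<bar>x i - x j\<bar>" if "i < d" "j < d" "i \<noteq> j" for i j using S nz that unfolding in_S_def by blast
  have inj: "inj_on x {..<d}"
  proof (rule inj_onI)
    fix i j assume "i \<in> {..<d}" "j \<in> {..<d}" "x i = x j"
    thus "i = j" using sep[of i j] dl by force
  qed
  have c: "card (x ` {..<d}) = Suc (d - 1)" using card_image[OF inj] d by simp
  have "real (d - 1) * \<delta> \<le> (1 - \<delta>) - \<delta>"
  proof (rule sep_bound[OF _ c])
    show "x ` {..<d} \<subseteq> {\<delta>..1 - \<delta>}" using pos by auto
    show "\<forall>u\<in>x ` {..<d}. \<forall>v\<in>x ` {..<d}. u \<noteq> v \<longrightarrow> \<delta> \<le> \<bar>u - v\<bar>" using sep by auto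
  qed simp
  moreover have "real (d - 1) = real d - 1" using d by simp
  ultimately show ?thesis using dl by (simp add: algebra_simps)
qed

theorem propositionC3:
  fixes \<gamma> :: real
  assumes "\<gamma> > 0"
  shows "\<exists>C > 0. \<forall>(d::nat) (\<delta>::real). d > 0 \<and> \<delta> > 0 \<longrightarrow>
           (\<exists>N :: relu_net.
              length (hidden_layers N) = 4 \<and>
              real (net_width N) \<le> C * real d powr (5/3 + \<gamma>) \<and>
              weights_bounded d N (1 / \<delta>) \<and>
              (\<forall>x. in_S d \<delta> x \<and> (\<forall>i<d. x i \<noteq> 0) \<and> success_cond \<gamma> d x
                     \<longrightarrow> net_eval d N x = median d x) \<and>
              (\<forall>x. (\<forall>i<d. 0 \<le> x i \<and> x i \<le> 1)
                     \<longrightarrow> net_eval d N x \<in> {- (real d ^ 2) .. real d ^ 2}))"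
proof (intro exI[of _ 121] conjI allI impI)
  show "(0::real) < 121" by simp
  fix d :: nat and \<delta> :: real
  assume dd: "d > 0 \<and> \<delta> > 0"
  show "\<exists>N :: relu_net.
              length (hidden_layers N) = 4 \<and>
              real (net_width N) \<le> 121 * real d powr (5/3 + \<gamma>) \<and>
              weights_bounded d N (1 / \<delta>) \<and>
              (\<forall>x. in_S d \<delta> x \<and> (\<forall>i<d. x i \<noteq> 0) \<and> success_cond \<gamma> d x
                     \<longrightarrow> net_eval d N x = median d x) \<and>
              (\<forall>x. (\<forall>i<d. 0 \<le> x i \<and> x i \<le> 1)
                     \<longrightarrow> net_eval d N x \<in> {- (real d ^ 2) .. real d ^ 2})"
  proof (cases "\<delta> * real d \<le> 1")
    case True
    interpret c: C3 \<gamma> d \<delta> by unfold_locales (use assms dd in auto)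
    show ?thesis
    proof (intro exI[of _ c.NN] conjI allI impI)
      show "length (hidden_layers c.NN) = 4" by (simp add: hidden_layers_def c.NN_def)
      show "real (net_width c.NN) \<le> 121 * real d powr (5/3 + \<gamma>)" by (rule c.width_bd)
      show "weights_bounded d c.NN (1 / \<delta>)" by (rule c.weights_ok[OF True])
      fix x
      { assume "in_S d \<delta> x \<and> (\<forall>i<d. x i \<noteq> 0) \<and> success_cond \<gamma> d x"
        thus "net_eval d c.NN x = median d x" using c.correct by (simp add: c.good_def) }
      show "net_eval d c.NN x \<in> {- (real d ^ 2) .. real d ^ 2}" by (rule c.bounded_out)
    qed
  next
    case False
    let ?Z = "(0::nat, (\<lambda>j i. 0::real), (\<lambda>j. 0::real))"
    let ?N = "([?Z, ?Z, ?Z, ?Z], (\<lambda>i. 0::real), 0::real) :: relu_net"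
    have ev: "net_eval d ?N x = 0" for x by (simp add: net_eval_def)
    show ?thesis
    proof (intro exI[of _ ?N] conjI allI impI)
      show "length (hidden_layers ?N) = 4" by (simp add: hidden_layers_def)
      have "0 \<le> 121 * real d powr (5/3 + \<gamma>)" by simp
      thus "real (net_width ?N) \<le> 121 * real d powr (5/3 + \<gamma>)" by (simp add: net_width_def)
      show "weights_bounded d ?N (1 / \<delta>)" using dd by (simp add: weights_bounded_def)
      fix x
      { assume a: "in_S d \<delta> x \<and> (\<forall>i<d. x i \<noteq> 0) \<and> success_cond \<gamma> d x"
        have "\<delta> * real d \<le> 1" using good_small_delta[of d \<delta> x] a dd by blast
        thus "net_eval d ?N x = median d x" using False by simp }
      show "net_eval d ?N x \<in> {- (real d ^ 2) .. real d ^ 2}" using ev by simp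
    qed
  qed
qed


end
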